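(* Fix $\beta>0$ and an MDP with a sink state as in the context. For each $t\in\mathbb N$, each stationary policy $\pi=(\bm d)_\infty\in\Pi_{\mathrm{SR}}$ and each probability vector $\bm\eta\in\Delta^S$: \[ \bm\eta^\top(\bm B^{\bm d})^t\bm b^{\bm d}=0\quad\Longleftrightarrow\quad\bm\eta^\top(\bm P^{\bm d})^t\bm p^{\bm d}=0. \]
   Context: MDP: states $\mathcal S=\{1,\dots,S\}$ plus sink state $e$; finite actions; transitions $p(s,a,s')$, real rewards $r(s,a,s')$. $\Pi_{\mathrm{SR}}$: stationary randomized policies $(\bm d)_\infty$, $d_a(s)$ the probability of action $a$ in $s$. $B^{\bm d}_{s,s'}=\sum_a p(s,a,s')d_a(s)e^{-\beta r(s,a,s')}$, $b^{\bm d}_s=\sum_a p(s,a,e)d_a(s)e^{-\beta r(s,a,e)}$, $P^{\bm d}_{s,s'}=\sum_a d_a(s)p(s,a,s')$, $p^{\bm d}_s=\sum_a d_a(s)p(s,a,e)$ for $s,s'\in\mathcal S$. $\Delta^S$ is the probability simplex in $\mathbb R^S$. *)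

theory Defs
  imports "HOL-Analysis.Analysis"
begin

text \<open>States: the finite type 's stands for {1..S}; the sink state e is None in 's option.\<close>

primrec matpow :: "real^'n^'n \<Rightarrow> nat \<Rightarrow> real^'n^'n" where
  "matpow A 0 = mat 1"
| "matpow A (Suc k) = A ** matpow A k"

definition Bmat :: "real \<Rightarrow> ('s::finite \<Rightarrow> 'a::finite \<Rightarrow> 's option \<Rightarrow> real)
   \<Rightarrow> ('s \<Rightarrow> 'a \<Rightarrow> 's option \<Rightarrow> real) \<Rightarrow> ('s \<Rightarrow> 'a \<Rightarrow> real) \<Rightarrow> real^'s^'s" where
  "Bmat \<beta> p r d = (\<chi> s s'. \<Sum>a\<in>UNIV. p s a (Some s') * d s a * exp (- \<beta> * r s a (Some s')))"

definition bvec :: "real \<Rightarrow> ('s::finite \<Rightarrow> 'a::finite \<Rightarrow> 's option \<Rightarrow> real)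
   \<Rightarrow> ('s \<Rightarrow> 'a \<Rightarrow> 's option \<Rightarrow> real) \<Rightarrow> ('s \<Rightarrow> 'a \<Rightarrow> real) \<Rightarrow> real^'s" where
  "bvec \<beta> p r d = (\<chi> s. \<Sum>a\<in>UNIV. p s a None * d s a * exp (- \<beta> * r s a None))"

definition Pmat :: "('s::finite \<Rightarrow> 'a::finite \<Rightarrow> 's option \<Rightarrow> real)
   \<Rightarrow> ('s \<Rightarrow> 'a \<Rightarrow> real) \<Rightarrow> real^'s^'s" where
  "Pmat p d = (\<chi> s s'. \<Sum>a\<in>UNIV. d s a * p s a (Some s'))"

definition pvec :: "('s::finite \<Rightarrow> 'a::finite \<Rightarrow> 's option \<Rightarrow> real)
   \<Rightarrow> ('s \<Rightarrow> 'a \<Rightarrow> real) \<Rightarrow> real^'s" where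
  "pvec p d = (\<chi> s. \<Sum>a\<in>UNIV. d s a * p s a None)"

end

theory Submission
  imports Defs
begin

definition simv :: "real^'n \<Rightarrow> real^'n \<Rightarrow> bool" where
  "simv x y \<longleftrightarrow> (\<forall>i. x$i \<ge> 0 \<and> y$i \<ge> 0 \<and> (x$i = 0 \<longleftrightarrow> y$i = 0))"

lemma sum_nonneg_zero_iff:
  fixes f :: "'i::finite \<Rightarrow> real"
  assumes "\<And>i. f i \<ge> 0"
  shows "(\<Sum>i\<in>UNIV. f i) = 0 \<longleftrightarrow> (\<forall>i. f i = 0)"
  using assms by (simp add: sum_nonneg_eq_0_iff)

lemma simv_mult:
  fixes A A' :: "real^'n::finite^'n"
  assumes "\<And>i. simv (A$i) (A'$i)" "simv x y"
  shows "simv (A *v x) (A' *v y)"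
  unfolding simv_def
proof (intro allI conjI)
  fix i
  have nA: "\<And>j. A$i$j * x$j \<ge> 0" "\<And>j. A'$i$j * y$j \<ge> 0"
    using assms unfolding simv_def by auto
  show "(A *v x)$i \<ge> 0" "(A' *v y)$i \<ge> 0"
    using nA by (auto simp: matrix_vector_mult_def intro: sum_nonneg)
  have "(A *v x)$i = 0 \<longleftrightarrow> (\<forall>j. A$i$j * x$j = 0)"
    unfolding matrix_vector_mult_def using nA by (simp add: sum_nonneg_zero_iff)
  also have "\<dots> \<longleftrightarrow> (\<forall>j. A'$i$j * y$j = 0)"
    using assms unfolding simv_def by auto
  also have "\<dots> \<longleftrightarrow> (A' *v y)$i = 0"
    unfolding matrix_vector_mult_def using nA by (simp add: sum_nonneg_zero_iff)
  finally show "(A *v x)$i = 0 \<longleftrightarrow> (A' *v y)$i = 0" .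
qed

lemma simv_pow:
  fixes A A' :: "real^'n::finite^'n"
  assumes "\<And>i. simv (A$i) (A'$i)" "simv x y"
  shows "simv (matpow A t *v x) (matpow A' t *v y)"
proof (induction t)
  case 0
  then show ?case using assms by simp
next
  case (Suc t)
  then show ?case using assms(1) simv_mult[OF assms(1) Suc]
    by (simp add: matrix_vector_mul_assoc[symmetric])
qed

lemma sum_terms_sim:
  fixes f g :: "'a::finite \<Rightarrow> real"
  assumes "\<And>a. f a \<ge> 0" "\<And>a. g a \<ge> 0" "\<And>a. f a = 0 \<longleftrightarrow> g a = 0"
  shows "(\<Sum>a\<in>UNIV. f a) \<ge> 0 \<and> (\<Sum>a\<in>UNIV. g a) \<ge> 0 \<and>
         ((\<Sum>a\<in>UNIV. f a) = 0 \<longleftrightarrow> (\<Sum>a\<in>UNIV. g a) = 0)"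
  using assms by (simp add: sum_nonneg sum_nonneg_zero_iff)

theorem lemma8:
  fixes \<beta> :: real
    and p :: "'s::finite \<Rightarrow> 'a::finite \<Rightarrow> 's option \<Rightarrow> real"
    and r :: "'s \<Rightarrow> 'a \<Rightarrow> 's option \<Rightarrow> real"
    and d :: "'s \<Rightarrow> 'a \<Rightarrow> real"
    and \<eta> :: "real^'s"
    and t :: nat
  assumes "\<beta> > 0"
    and "\<And>s a s'. p s a s' \<ge> 0"
    and "\<And>s a. (\<Sum>s'\<in>UNIV. p s a s') = 1"
    and "\<And>s a. d s a \<ge> 0"
    and "\<And>s. (\<Sum>a\<in>UNIV. d s a) = 1"
    and "\<And>s. \<eta> $ s \<ge> 0"
    and "(\<Sum>s\<in>UNIV. \<eta> $ s) = 1"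
  shows "\<eta> \<bullet> (matpow (Bmat \<beta> p r d) t *v bvec \<beta> p r d) = 0
     \<longleftrightarrow> \<eta> \<bullet> (matpow (Pmat p d) t *v pvec p d) = 0"
proof -
  have M: "simv (Bmat \<beta> p r d $ i) (Pmat p d $ i)" for i
    unfolding simv_def Bmat_def Pmat_def
    using sum_terms_sim[of "\<lambda>a. p i a (Some _) * d i a * exp (- \<beta> * r i a (Some _))"
        "\<lambda>a. d i a * p i a (Some _)"] assms(2,4)
    by (simp add: mult.commute)
  have V: "simv (bvec \<beta> p r d) (pvec p d)"
    unfolding simv_def bvec_def pvec_def
    using sum_terms_sim[of "\<lambda>a. p _ a None * d _ a * exp (- \<beta> * r _ a None)"
        "\<lambda>a. d _ a * p _ a None"] assms(2,4)
    by (simp add: mult.commute)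
  define x where "x = matpow (Bmat \<beta> p r d) t *v bvec \<beta> p r d"
  define y where "y = matpow (Pmat p d) t *v pvec p d"
  have S: "simv x y" unfolding x_def y_def using simv_pow[OF M V] .
  have nx: "\<And>i. \<eta>$i * x$i \<ge> 0" and ny: "\<And>i. \<eta>$i * y$i \<ge> 0"
    using S assms(6) unfolding simv_def by auto
  have "\<eta> \<bullet> x = 0 \<longleftrightarrow> (\<forall>i. \<eta>$i * x$i = 0)"
    unfolding inner_vec_def using nx by (simp add: sum_nonneg_zero_iff)
  also have "\<dots> \<longleftrightarrow> (\<forall>i. \<eta>$i * y$i = 0)"
    using S unfolding simv_def by auto
  also have "\<dots> \<longleftrightarrow> \<eta> \<bullet> y = 0"
    unfolding inner_vec_def using ny by (simp add: sum_nonneg_zero_iff)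
  finally show ?thesis unfolding x_def y_def .
qed

end
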